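(* Let $J\subset\mathbb{Z}$ and $S\subseteq\mathcal{U}$. Run the Simple algorithm with input $J$, where the elements revealed to it are exactly the elements of $S$, in an arbitrary order. Then the algorithm returns an independent set $P\subseteq S$ such that for every $j\in J$, $$\mathrm{rank}(B_P(j))\ \ge\ \mathrm{rank}\big(B_S(J\setminus\{j\})\cup B_S(j)\big)-\mathrm{rank}\big(B_S(J\setminus\{j\})\big).$$
   Context: $M=(\mathcal{U},\mathcal{I})$ is a matroid; $\mathrm{rank}(X)=\max\{|X'|:X'\subseteq X,X'\in\mathcal{I}\}$ and $\mathrm{span}(X)=\{e\in\mathcal{U}:\mathrm{rank}(X\cup\{e\})=\mathrm{rank}(X)\}$. Every element $e$ has a value $\mathrm{val}(e)\ge 0$; standing assumption: elements of rank $0$ have value $0$, and every element of positive value has value $2^i$ for some $i\in\mathbb{Z}$. For $i\in\mathbb{Z}$ and $X\subseteq\mathcal{U}$, $B_X(i)=\{e\in X:\mathrm{val}(e)=2^i\}$ and for $I\subseteq\mathbb{Z}$, $B_X(I)=\bigcup_{i\in I}B_X(i)$. Logarithms are base 2. Simple algorithm with input $J\subset\mathbb{Z}$: start with $P=\emptyset$; immediately after each element $e$ is revealed, if $\mathrm{val}(e)>0$, $\log\mathrm{val}(e)\in J$ and $e\notin\mathrm{span}(P)$, then add $e$ to $P$. Output $P$. *)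

theory Defs
  imports Complex_Main
begin

definition matroid :: "'a set \<Rightarrow> ('a set \<Rightarrow> bool) \<Rightarrow> bool" where
  "matroid U Ind \<longleftrightarrow> finite U
     \<and> (\<forall>X. Ind X \<longrightarrow> X \<subseteq> U)
     \<and> Ind {}
     \<and> (\<forall>X Y. Ind Y \<and> X \<subseteq> Y \<longrightarrow> Ind X)
     \<and> (\<forall>X Y. Ind X \<and> Ind Y \<and> card X < card Y \<longrightarrow> (\<exists>e\<in>Y - X. Ind (insert e X)))"

definition mrank :: "('a set \<Rightarrow> bool) \<Rightarrow> 'a set \<Rightarrow> nat" where
  "mrank Ind X = Max {card X' | X'. X' \<subseteq> X \<and> Ind X'}"

definition mspan :: "'a set \<Rightarrow> ('a set \<Rightarrow> bool) \<Rightarrow> 'a set \<Rightarrow> 'a set" where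
  "mspan U Ind X = {e \<in> U. mrank Ind (X \<union> {e}) = mrank Ind X}"

definition Bk :: "('a \<Rightarrow> real) \<Rightarrow> 'a set \<Rightarrow> int \<Rightarrow> 'a set" where
  "Bk val X i = {e \<in> X. val e = 2 powr (real_of_int i)}"

definition BI :: "('a \<Rightarrow> real) \<Rightarrow> 'a set \<Rightarrow> int set \<Rightarrow> 'a set" where
  "BI val X I = (\<Union>i\<in>I. Bk val X i)"

definition simple_step :: "'a set \<Rightarrow> ('a set \<Rightarrow> bool) \<Rightarrow> ('a \<Rightarrow> real) \<Rightarrow> int set
     \<Rightarrow> 'a set \<Rightarrow> 'a \<Rightarrow> 'a set" where
  "simple_step U Ind val J P e =
     (if val e > 0 \<and> log 2 (val e) \<in> real_of_int ` J \<and> e \<notin> mspan U Ind P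
      then insert e P else P)"

definition simple_alg :: "'a set \<Rightarrow> ('a set \<Rightarrow> bool) \<Rightarrow> ('a \<Rightarrow> real) \<Rightarrow> int set
     \<Rightarrow> 'a list \<Rightarrow> 'a set" where
  "simple_alg U Ind val J xs = foldl (simple_step U Ind val J) {} xs"

end

theory Submission
  imports Defs
begin

lemma mat_fin: "matroid U Ind \<Longrightarrow> finite U"
  unfolding matroid_def by (elim conjE)
lemma mat_sub: "matroid U Ind \<Longrightarrow> Ind X \<Longrightarrow> X \<subseteq> U"
  unfolding matroid_def by (elim conjE) (erule allE, erule mp)
lemma mat_empty: "matroid U Ind \<Longrightarrow> Ind {}"
  unfolding matroid_def by (elim conjE)
lemma mat_down: "matroid U Ind \<Longrightarrow> Ind Y \<Longrightarrow> X \<subseteq> Y \<Longrightarrow> Ind X"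
  unfolding matroid_def by (elim conjE) (erule allE, erule allE, erule mp, rule conjI)
lemma mat_aug: "matroid U Ind \<Longrightarrow> Ind X \<Longrightarrow> Ind Y \<Longrightarrow> card X < card Y \<Longrightarrow> \<exists>e\<in>Y - X. Ind (insert e X)"
  unfolding matroid_def by (elim conjE) (erule allE, erule allE, erule mp, intro conjI)

lemma mr_fin:
  assumes M: "matroid U Ind"
  shows "finite {card X' | X'. X' \<subseteq> X \<and> Ind X'}"
proof -
  have "{card X' | X'. X' \<subseteq> X \<and> Ind X'} \<subseteq> card ` Pow U"
    using mat_sub[OF M] by blast
  moreover have "finite U" using mat_fin[OF M] .
  ultimately show ?thesis by (simp add: finite_subset)
qed

lemma mrank_ge:
  assumes M: "matroid U Ind" and "X' \<subseteq> X" "Ind X'"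
  shows "card X' \<le> mrank Ind X"
  unfolding mrank_def using mr_fin[OF M, of X] assms by (intro Max_ge) auto

lemma mrank_obtain:
  assumes M: "matroid U Ind"
  shows "\<exists>X'. X' \<subseteq> X \<and> Ind X' \<and> card X' = mrank Ind X"
proof -
  have ne: "{card X' | X'. X' \<subseteq> X \<and> Ind X'} \<noteq> {}"
    using mat_empty[OF M] by blast
  have "mrank Ind X \<in> {card X' | X'. X' \<subseteq> X \<and> Ind X'}"
    unfolding mrank_def using Max_in[OF mr_fin[OF M] ne] .
  then show ?thesis by auto
qed

lemma ind_fin:
  assumes M: "matroid U Ind" and "Ind P" shows "finite P"
  using mat_sub[OF assms] mat_fin[OF M] by (rule finite_subset)

lemma mrank_max:
  assumes M: "matroid U Ind" and P: "Ind P" "P \<subseteq> Y"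
    and D: "\<forall>y\<in>Y - P. \<not> Ind (insert y P)"
  shows "mrank Ind Y = card P"
proof -
  obtain X where X: "X \<subseteq> Y" "Ind X" "card X = mrank Ind Y" using mrank_obtain[OF M] by blast
  have "card X \<le> card P"
  proof (rule ccontr)
    assume "\<not> ?thesis"
    then have "card P < card X" by simp
    then obtain e where "e \<in> X - P" "Ind (insert e P)"
      using mat_aug[OF M P(1) X(2)] by blast
    then show False using D X by blast
  qed
  moreover have "card P \<le> mrank Ind Y" using mrank_ge[OF M P(2) P(1)] .
  ultimately show ?thesis using X by simp
qed

lemma mrank_indep:
  assumes M: "matroid U Ind" and P: "Ind P"
  shows "mrank Ind P = card P"
  using mrank_max[OF M P] by simp

definition good :: "('a \<Rightarrow> real) \<Rightarrow> int set \<Rightarrow> 'a \<Rightarrow> bool" where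
  "good val J e \<longleftrightarrow> val e > 0 \<and> log 2 (val e) \<in> real_of_int ` J"

lemma step_T: "good val J x \<Longrightarrow> x \<notin> mspan U Ind P \<Longrightarrow> simple_step U Ind val J P x = insert x P"
  unfolding simple_step_def good_def by (rule if_P) blast

lemma step_F: "\<not> (good val J x \<and> x \<notin> mspan U Ind P) \<Longrightarrow> simple_step U Ind val J P x = P"
  unfolding simple_step_def good_def by (rule if_not_P) blast

lemma step_prop:
  assumes M: "matroid U Ind" and P: "Ind P" and x: "x \<in> U"
  shows "Ind (simple_step U Ind val J P x) \<and> P \<subseteq> simple_step U Ind val J P x
    \<and> simple_step U Ind val J P x \<subseteq> P \<union> {e. e = x \<and> good val J e}
    \<and> (good val J x \<longrightarrow> x \<in> simple_step U Ind val J P x \<or> \<not> Ind (insert x (simple_step U Ind val J P x)))"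
proof (cases "good val J x \<and> x \<notin> mspan U Ind P")
  case True
  have "Ind (insert x P)"
  proof (rule ccontr)
    assume n: "\<not> Ind (insert x P)"
    have "mrank Ind (insert x P) = card P"
    proof (rule mrank_max[OF M P])
      show "P \<subseteq> insert x P" by blast
      show "\<forall>y\<in>insert x P - P. \<not> Ind (insert y P)" using n by blast
    qed
    then have "mrank Ind (P \<union> {x}) = mrank Ind P" using mrank_indep[OF M P] by simp
    then have "x \<in> mspan U Ind P" using x unfolding mspan_def by blast
    then show False using True by blast
  qed
  moreover have eq: "simple_step U Ind val J P x = insert x P"
    using True by (intro step_T) blast+
  ultimately show ?thesis unfolding eq using True by blast
next
  case False
  then have st: "simple_step U Ind val J P x = P" by (rule step_F)
  have "good val J x \<longrightarrow> x \<in> P \<or> \<not> Ind (insert x P)"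
  proof (intro impI)
    assume g: "good val J x"
    then have sp: "x \<in> mspan U Ind P" using False by blast
    then have sp2: "mrank Ind (P \<union> {x}) = mrank Ind P" unfolding mspan_def by blast
    show "x \<in> P \<or> \<not> Ind (insert x P)"
    proof (rule ccontr)
      assume "\<not> ?thesis"
      then have xn: "x \<notin> P" and I: "Ind (insert x P)" by auto
      have "card (insert x P) \<le> mrank Ind (P \<union> {x})"
        using mrank_ge[OF M _ I, of "P \<union> {x}"] by simp
      moreover have "card (insert x P) = card P + 1"
        using xn ind_fin[OF M P] by simp
      ultimately show False using sp2 mrank_indep[OF M P] by simp
    qed
  qed
  then show ?thesis unfolding st using P by blast
qed

lemma fold_prop:
  assumes M: "matroid U Ind"
  shows "Ind P \<Longrightarrow> set xs \<subseteq> U \<Longrightarrow>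
    Ind (foldl (simple_step U Ind val J) P xs) \<and> P \<subseteq> foldl (simple_step U Ind val J) P xs
    \<and> foldl (simple_step U Ind val J) P xs \<subseteq> P \<union> {e \<in> set xs. good val J e}
    \<and> (\<forall>e\<in>set xs. good val J e \<longrightarrow> e \<in> foldl (simple_step U Ind val J) P xs
          \<or> \<not> Ind (insert e (foldl (simple_step U Ind val J) P xs)))"
proof (induction xs arbitrary: P)
  case Nil then show ?case by simp
next
  case (Cons x xs)
  define P' where "P' = simple_step U Ind val J P x"
  have s: "Ind P' \<and> P \<subseteq> P' \<and> P' \<subseteq> P \<union> {e. e = x \<and> good val J e}
    \<and> (good val J x \<longrightarrow> x \<in> P' \<or> \<not> Ind (insert x P'))"
    unfolding P'_def using step_prop[OF M Cons.prems(1)] Cons.prems(2) by auto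
  have IH: "Ind (foldl (simple_step U Ind val J) P' xs) \<and> P' \<subseteq> foldl (simple_step U Ind val J) P' xs
    \<and> foldl (simple_step U Ind val J) P' xs \<subseteq> P' \<union> {e \<in> set xs. good val J e}
    \<and> (\<forall>e\<in>set xs. good val J e \<longrightarrow> e \<in> foldl (simple_step U Ind val J) P' xs
          \<or> \<not> Ind (insert e (foldl (simple_step U Ind val J) P' xs)))"
    using Cons.IH[of P'] s Cons.prems(2) by auto
  define Q where "Q = foldl (simple_step U Ind val J) P' xs"
  have sub: "\<And>A B. Ind B \<Longrightarrow> A \<subseteq> B \<Longrightarrow> Ind A" using mat_down[OF M] by blast
  have "good val J x \<longrightarrow> x \<in> Q \<or> \<not> Ind (insert x Q)"
  proof
    assume "good val J x"
    then have "x \<in> P' \<or> \<not> Ind (insert x P')" using s by blast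
    moreover have "P' \<subseteq> Q" using IH Q_def by blast
    ultimately show "x \<in> Q \<or> \<not> Ind (insert x Q)" using sub[of "insert x Q" "insert x P'"] by blast
  qed
  have QQ: "foldl (simple_step U Ind val J) P (x # xs) = Q" unfolding Q_def P'_def by simp
  show ?case unfolding QQ using IH s \<open>good val J x \<longrightarrow> x \<in> Q \<or> \<not> Ind (insert x Q)\<close> unfolding Q_def[symmetric] by auto
qed

lemma good_BI:
  "good val J e \<longleftrightarrow> (\<exists>i\<in>J. val e = 2 powr real_of_int i)"
proof
  assume "good val J e"
  then obtain i where "i \<in> J" "val e > 0" "log 2 (val e) = real_of_int i" unfolding good_def by auto
  then have "val e = 2 powr real_of_int i" by (metis powr_log_cancel one_less_numeral_iff semiring_norm(76) zero_less_numeral less_numeral_extra(4))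
  then show "\<exists>i\<in>J. val e = 2 powr real_of_int i" using \<open>i \<in> J\<close> by blast
next
  assume "\<exists>i\<in>J. val e = 2 powr real_of_int i"
  then obtain i where "i \<in> J" "val e = 2 powr real_of_int i" by blast
  then show "good val J e" unfolding good_def by simp
qed

theorem lemma1:
  fixes U :: "'a set" and Ind :: "'a set \<Rightarrow> bool" and val :: "'a \<Rightarrow> real"
    and J :: "int set" and S :: "'a set" and xs :: "'a list"
  assumes M: "matroid U Ind"
    and val_nonneg: "\<And>e. e \<in> U \<Longrightarrow> val e \<ge> 0"
    and rank0: "\<And>e. e \<in> U \<Longrightarrow> mrank Ind {e} = 0 \<Longrightarrow> val e = 0"
    and pow2: "\<And>e. e \<in> U \<Longrightarrow> val e > 0 \<Longrightarrow> \<exists>i::int. val e = 2 powr (real_of_int i)"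
    and S: "S \<subseteq> U"
    and order: "set xs = S" "distinct xs"
  shows "Ind (simple_alg U Ind val J xs)
       \<and> simple_alg U Ind val J xs \<subseteq> S
       \<and> (\<forall>j\<in>J. int (mrank Ind (Bk val (simple_alg U Ind val J xs) j))
              \<ge> int (mrank Ind (BI val S (J - {j}) \<union> Bk val S j))
                - int (mrank Ind (BI val S (J - {j}))))"
proof -
  define P where "P = simple_alg U Ind val J xs"
  have e: "Ind {}" using mat_empty[OF M] .
  have F: "Ind P \<and> P \<subseteq> {e \<in> S. good val J e}
    \<and> (\<forall>e\<in>S. good val J e \<longrightarrow> e \<in> P \<or> \<not> Ind (insert e P))"
    using fold_prop[OF M e, of xs val J] S order unfolding P_def simple_alg_def by auto
  have sub: "\<And>A B. Ind B \<Longrightarrow> A \<subseteq> B \<Longrightarrow> Ind A" using mat_down[OF M] by blast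
  have finP: "finite P" using ind_fin[OF M] F by blast
  have "\<forall>j\<in>J. int (mrank Ind (Bk val P j))
              \<ge> int (mrank Ind (BI val S (J - {j}) \<union> Bk val S j))
                - int (mrank Ind (BI val S (J - {j})))"
  proof
    fix j assume j: "j \<in> J"
    define A where "A = BI val S (J - {j})"
    define B where "B = Bk val S j"
    have AB: "A \<union> B = {e \<in> S. good val J e}"
      unfolding A_def B_def BI_def Bk_def good_BI using j by auto
    have r1: "mrank Ind (A \<union> B) = card P"
      by (rule mrank_max[OF M]) (use F AB in auto)
    define PB where "PB = Bk val P j"
    have PBs: "PB \<subseteq> P" unfolding PB_def Bk_def by auto
    have r2: "mrank Ind PB = card PB" using mrank_indep[OF M] sub[OF _ PBs] F by blast
    have PA: "P - PB \<subseteq> A"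
    proof
      fix e assume e: "e \<in> P - PB"
      then have "e \<in> S" "good val J e" using F by auto
      then obtain i where "i \<in> J" "val e = 2 powr real_of_int i" using good_BI by metis
      moreover have "i \<noteq> j" using e calculation unfolding PB_def Bk_def by auto
      ultimately show "e \<in> A" unfolding A_def BI_def Bk_def using \<open>e \<in> S\<close> by auto
    qed
    have r3: "card (P - PB) \<le> mrank Ind A"
      using mrank_ge[OF M PA] sub[of P "P - PB"] F by blast
    have "card P = card (P - PB) + card PB"
      using card_Diff_subset[OF finite_subset[OF PBs finP] PBs] card_mono[OF finP PBs] by simp
    then show "int (mrank Ind (Bk val P j))
              \<ge> int (mrank Ind (BI val S (J - {j}) \<union> Bk val S j))
                - int (mrank Ind (BI val S (J - {j})))"
      using r1 r2 r3 unfolding A_def[symmetric] B_def[symmetric] PB_def[symmetric] by linarith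
  qed
  then show ?thesis using F unfolding P_def by blast
qed

end
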